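(* Let $M,N,K$ be symmetric homogeneous bi-variate means having symmetric asymptotic expansions with coefficients $(a^M_n)$, $(a^N_n)$, $(a^K_n)$. Suppose $K$ and $M$ are stable and $N$ is $(K,M)$-stabilizable, i.e. $N(s,t)=K\big(N(s,M(s,t)),N(M(s,t),t)\big)$ for all $s,t>0$. Then $a^N_0=1$ and for $m\ge1$ $$a^N_m=\frac{2^{2m}}{2^{2m}-1}\Big[\frac12\sum_{n=0}^{m-1}a^N_n\sum_{k=0}^{2m-2n}P[k,2n,\mathbf g^M]P[2m-2n-k,-2n+1,\mathbf h^M]+\sum_{n=1}^ma^K_n\sum_{k=0}^{m-n}P[k,2n,\mathbf d]P[m-n-k,-2n+1,\mathbf s]\Big],$$ with $\mathbf d,\mathbf s$ defined by $d_m=-\frac12\sum_{n=0}^ma^N_n\sum_{k=0}^{2m+1-2n}P[k,2n,\mathbf g^M]P[2m+1-2n-k,-2n+1,\mathbf h^M]$ and $s_m=\frac12\sum_{n=0}^ma^N_n\sum_{k=0}^{2m-2n}P[k,2n,\mathbf g^M]P[2m-2n-k,-2n+1,\mathbf h^M]$. In particular $a^N_1=\frac13(a^K_1+2a^M_1)$.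
   Context: A bi-variate mean is $M:(0,\infty)^2\to(0,\infty)$ with $\min(s,t)\le M(s,t)\le\max(s,t)$; symmetric and homogeneous (degree 1) as usual. $M$ is stable if $M(s,t)=M\big(M(s,M(s,t)),M(M(s,t),t)\big)$. For two nontrivial stable means $K,M$, a mean $N$ is $(K,M)$-stabilizable if $N(s,t)=K\big(N(s,M(s,t)),N(M(s,t),t)\big)$ for all $s,t>0$. A mean has a symmetric asymptotic expansion with coefficients $(a_n)$ if for every fixed real $t$ and $N\ge0$, $M(x-t,x+t)=\sum_{n=0}^Na_nt^{2n}x^{-2n+1}+o(x^{-2N+1})$ as $x\to\infty$. For a sequence $\mathbf b$ with $b_0\ne0$, $r\in\mathbb R$: $P[0,r,\mathbf b]=b_0^r$, $P[n,r,\mathbf b]=\frac1{nb_0}\sum_{k=1}^n(k(1+r)-n)b_kP[n-k,r,\mathbf b]$ ($n\ge1$), i.e. the coefficient of $z^n$ in $(\sum_jb_jz^j)^r$. $\mathbf g^M=(1,a^M_1,0,a^M_2,0,\ldots)$ ($g_0=1$, $g_{2k-1}=a^M_k$, $g_{2k}=0$), $\mathbf h^M=(2,-1,a^M_1,0,a^M_2,0,\ldots)$ ($h_0=2$, $h_1=-1$, $h_{2k}=a^M_k$, $h_{2k+1}=0$), $k\ge1$. *)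

theory Defs
  imports Complex_Main "HOL-Library.Landau_Symbols"
begin

text \<open>Bi-variate means, represented as functions real => real => real; only the
  values on positive arguments matter.\<close>

definition is_mean :: "(real \<Rightarrow> real \<Rightarrow> real) \<Rightarrow> bool" where
  "is_mean M \<longleftrightarrow> (\<forall>s>0. \<forall>t>0. min s t \<le> M s t \<and> M s t \<le> max s t)"

definition symmetric_mean :: "(real \<Rightarrow> real \<Rightarrow> real) \<Rightarrow> bool" where
  "symmetric_mean M \<longleftrightarrow> (\<forall>s>0. \<forall>t>0. M s t = M t s)"

definition homogeneous_mean :: "(real \<Rightarrow> real \<Rightarrow> real) \<Rightarrow> bool" where
  "homogeneous_mean M \<longleftrightarrow> (\<forall>l>0. \<forall>s>0. \<forall>t>0. M (l * s) (l * t) = l * M s t)"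

definition stable_mean :: "(real \<Rightarrow> real \<Rightarrow> real) \<Rightarrow> bool" where
  "stable_mean M \<longleftrightarrow> (\<forall>s>0. \<forall>t>0. M s t = M (M s (M s t)) (M (M s t) t))"

definition stabilizable :: "(real \<Rightarrow> real \<Rightarrow> real) \<Rightarrow> (real \<Rightarrow> real \<Rightarrow> real)
    \<Rightarrow> (real \<Rightarrow> real \<Rightarrow> real) \<Rightarrow> bool" where
  "stabilizable K M N \<longleftrightarrow> (\<forall>s>0. \<forall>t>0. N s t = K (N s (M s t)) (N (M s t) t))"

definition has_sym_expansion :: "(real \<Rightarrow> real \<Rightarrow> real) \<Rightarrow> (nat \<Rightarrow> real) \<Rightarrow> bool" where
  "has_sym_expansion M a \<longleftrightarrow>
     (\<forall>t::real. \<forall>N::nat.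
        (\<lambda>x. M (x - t) (x + t) - (\<Sum>n\<le>N. a n * t ^ (2 * n) * x powr (1 - 2 * real n)))
          \<in> o[at_top](\<lambda>x. x powr (1 - 2 * real N)))"

fun P :: "nat \<Rightarrow> real \<Rightarrow> (nat \<Rightarrow> real) \<Rightarrow> real" where
  "P 0 r b = b 0 powr r"
| "P (Suc n) r b = (1 / (real (Suc n) * b 0)) *
     (\<Sum>k\<in>{1..Suc n}. (real k * (1 + r) - real (Suc n)) * b k * P (Suc n - k) r b)"

definition gseq :: "(nat \<Rightarrow> real) \<Rightarrow> nat \<Rightarrow> real" where
  "gseq a j = (if j = 0 then 1 else if odd j then a ((j + 1) div 2) else 0)"

definition hseq :: "(nat \<Rightarrow> real) \<Rightarrow> nat \<Rightarrow> real" where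
  "hseq a j = (if j = 0 then 2 else if j = 1 then -1 else if even j then a (j div 2) else 0)"

definition dseq :: "(nat \<Rightarrow> real) \<Rightarrow> (nat \<Rightarrow> real) \<Rightarrow> nat \<Rightarrow> real" where
  "dseq aN aM m = - (1/2) * (\<Sum>n\<le>m. aN n * (\<Sum>k\<le>2*m+1-2*n.
      P k (2 * real n) (gseq aM) * P (2*m+1-2*n-k) (1 - 2 * real n) (hseq aM)))"

definition sseq :: "(nat \<Rightarrow> real) \<Rightarrow> (nat \<Rightarrow> real) \<Rightarrow> nat \<Rightarrow> real" where
  "sseq aN aM m = (1/2) * (\<Sum>n\<le>m. aN n * (\<Sum>k\<le>2*m-2*n.
      P k (2 * real n) (gseq aM) * P (2*m-2*n-k) (1 - 2 * real n) (hseq aM)))"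

end

theory Submission
  imports Defs "HOL-Computational_Algebra.Formal_Power_Series" "HOL-Computational_Algebra.Polynomial"
begin

definition T :: "nat \<Rightarrow> real fps \<Rightarrow> real \<Rightarrow> real" where
  "T N F u = (\<Sum>j\<le>N. fps_nth F j * u ^ j)"

definition hexpN :: "nat \<Rightarrow> (real \<Rightarrow> real) \<Rightarrow> real fps \<Rightarrow> bool" where
  "hexpN N f F \<longleftrightarrow> (\<lambda>u. f u - T N F u) \<in> o[nhds 0](\<lambda>u. u ^ N)"

definition hexp :: "(real \<Rightarrow> real) \<Rightarrow> real fps \<Rightarrow> bool" where
  "hexp f F \<longleftrightarrow> (\<forall>N. hexpN N f F)"

lemma ev_near: "d > 0 \<Longrightarrow> eventually (\<lambda>u::real. \<bar>u\<bar> < d) (nhds 0)"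
  by (auto simp: eventually_nhds_metric dist_real_def intro!: exI[of _ d])

lemma pow_small:
  assumes "N < j"
  shows "(\<lambda>u::real. c * u ^ j) \<in> o[nhds 0](\<lambda>u. u ^ N)"
proof (rule landau_o.smallI)
  fix e :: real assume e: "e > 0"
  have "eventually (\<lambda>u::real. \<bar>u\<bar> < min 1 (e / (\<bar>c\<bar> + 1))) (nhds 0)"
    using e by (intro ev_near) auto
  then show "\<forall>\<^sub>F u in nhds 0. norm (c * u ^ j) \<le> e * norm (u ^ N)"
  proof eventually_elim
    case (elim u)
    have u1: "\<bar>u\<bar> \<le> 1" using elim by auto
    have "\<bar>u\<bar> ^ j \<le> \<bar>u\<bar> ^ Suc N"
      using assms u1 by (intro power_decreasing) auto
    also have "\<dots> = \<bar>u\<bar> * \<bar>u\<bar> ^ N" by simp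
    finally have A: "\<bar>u\<bar> ^ j \<le> \<bar>u\<bar> * \<bar>u\<bar> ^ N" .
    have B: "\<bar>c\<bar> * \<bar>u\<bar> \<le> e"
    proof -
      have "\<bar>u\<bar> \<le> e / (\<bar>c\<bar> + 1)" using elim by auto
      hence "(\<bar>c\<bar> + 1) * \<bar>u\<bar> \<le> e" by (simp add: field_simps)
      moreover have "\<bar>c\<bar> * \<bar>u\<bar> \<le> (\<bar>c\<bar> + 1) * \<bar>u\<bar>" by (intro mult_right_mono) auto
      ultimately show ?thesis by linarith
    qed
    have "norm (c * u ^ j) = \<bar>c\<bar> * \<bar>u\<bar> ^ j" by (simp add: abs_mult power_abs)
    also have "\<dots> \<le> \<bar>c\<bar> * (\<bar>u\<bar> * \<bar>u\<bar> ^ N)" using A by (intro mult_left_mono) auto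
    also have "\<dots> = (\<bar>c\<bar> * \<bar>u\<bar>) * \<bar>u\<bar> ^ N" by simp
    also have "\<dots> \<le> e * \<bar>u\<bar> ^ N" using B by (intro mult_right_mono) auto
    finally show ?case by (simp add: power_abs)
  qed
qed

lemma pow_bigo:
  assumes "N \<le> K"
  shows "(\<lambda>u::real. u ^ K) \<in> O[nhds 0](\<lambda>u. u ^ N)"
proof -
  have "\<forall>\<^sub>F u in nhds 0. norm (u ^ K) \<le> 1 * norm ((u::real) ^ N)"
    using ev_near[OF zero_less_one]
  proof (rule eventually_mono)
    fix u :: real assume "\<bar>u\<bar> < 1"
    thus "norm (u ^ K) \<le> 1 * norm (u ^ N)"
      using assms by (simp add: power_abs power_decreasing)
  qed
  thus ?thesis by (rule bigoI)
qed

lemma pow_bigo1: "(\<lambda>u::real. c * u ^ K) \<in> O[nhds 0](\<lambda>_. 1)"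
proof -
  have "(\<lambda>u::real. u ^ K) \<in> O[nhds 0](\<lambda>u. u ^ 0)" by (rule pow_bigo) simp
  hence "(\<lambda>u::real. u ^ K) \<in> O[nhds 0](\<lambda>_. 1)" by simp
  thus ?thesis using landau_o.big.mult[OF bigo_const[of c]] by simp
qed

lemma T_bigo1: "(\<lambda>u. T N F u) \<in> O[nhds 0](\<lambda>_. 1)"
  unfolding T_def by (intro big_sum_in_bigo pow_bigo1)

lemma T_split:
  assumes "N \<le> K"
  shows "T K F u = T N F u + (\<Sum>j\<in>{N<..K}. fps_nth F j * u ^ j)"
proof -
  have e: "{..K} = {..N} \<union> {N<..K}" using assms by auto
  show ?thesis unfolding T_def e by (rule sum.union_disjoint) auto
qed

lemma hexpN_mono:
  assumes "hexpN K f F" "N \<le> K"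
  shows "hexpN N f F"
proof -
  have 1: "(\<lambda>u. f u - T K F u) \<in> o[nhds 0](\<lambda>u. u ^ N)"
    using assms unfolding hexpN_def by (rule landau_o.small_big_trans[OF _ pow_bigo])
  have 2: "(\<lambda>u. \<Sum>j\<in>{N<..K}. fps_nth F j * u ^ j) \<in> o[nhds 0](\<lambda>u. u ^ N)"
    by (intro big_sum_in_smallo pow_small) auto
  have "(\<lambda>u. (f u - T K F u) + (\<Sum>j\<in>{N<..K}. fps_nth F j * u ^ j)) \<in> o[nhds 0](\<lambda>u. u ^ N)"
    by (rule sum_in_smallo(1)[OF 1 2])
  thus ?thesis unfolding hexpN_def using T_split[OF assms(2), of F] by simp
qed

lemma hexp_intro:
  assumes "\<And>N. \<exists>K\<ge>N. hexpN K f F"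
  shows "hexp f F"
  unfolding hexp_def using assms hexpN_mono by blast

lemma T_cong: "(\<And>j. j \<le> N \<Longrightarrow> fps_nth F j = fps_nth G j) \<Longrightarrow> T N F u = T N G u"
  unfolding T_def by (intro sum.cong) auto

lemma hexpN_cong_coeff:
  "(\<And>j. j \<le> N \<Longrightarrow> fps_nth F j = fps_nth G j) \<Longrightarrow> hexpN N f F \<longleftrightarrow> hexpN N f G"
  unfolding hexpN_def using T_cong[of N F G] by simp

lemma hexpN_cong_fun:
  assumes "eventually (\<lambda>u. f u = g u) (nhds 0)"
  shows "hexpN N f F \<longleftrightarrow> hexpN N g F"
  unfolding hexpN_def
  by (rule landau_o.small.cong_ex) (use assms in \<open>auto elim: eventually_mono\<close>)

lemma hexp_cong_fun:
  assumes "eventually (\<lambda>u. f u = g u) (nhds 0)"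
  shows "hexp f F \<longleftrightarrow> hexp g F"
  unfolding hexp_def using hexpN_cong_fun[OF assms] by blast

lemma T_const: "T N (fps_const c) u = c"
proof -
  have "T N (fps_const c) u = (\<Sum>j\<le>N. (if j = 0 then c else 0))"
    unfolding T_def by (intro sum.cong) auto
  thus ?thesis by simp
qed

lemma T_one: "T N 1 u = 1"
  using T_const[of N 1 u] by simp

lemma hexp_const: "hexp (\<lambda>u. c) (fps_const c)"
  unfolding hexp_def hexpN_def T_const by simp

lemma T_X: "T N fps_X u = (if N = 0 then 0 else u)"
proof (cases N)
  case (Suc n)
  have "(\<Sum>j\<le>N. fps_nth fps_X j * u ^ j) = (\<Sum>j\<le>N. (if j = 1 then u else 0))"
    by (intro sum.cong) (auto simp: fps_X_def)
  thus ?thesis using Suc unfolding T_def by simp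
qed (simp add: T_def fps_X_def)

lemma hexp_X: "hexp (\<lambda>u. u) fps_X"
  unfolding hexp_def hexpN_def
proof
  fix N show "(\<lambda>u. u - T N fps_X u) \<in> o[nhds 0](\<lambda>u. u ^ N)"
  proof (cases N)
    case 0
    have "(\<lambda>u::real. 1 * u ^ 1) \<in> o[nhds 0](\<lambda>u. u ^ 0)" by (rule pow_small) simp
    thus ?thesis using 0 by (simp add: T_X)
  qed (simp add: T_X)
qed

lemma T_add: "T N (F + G) u = T N F u + T N G u"
  unfolding T_def by (simp add: sum.distrib algebra_simps)
lemma T_diff: "T N (F - G) u = T N F u - T N G u"
  unfolding T_def by (simp add: sum_subtractf algebra_simps)
lemma T_uminus: "T N (- G) u = - T N G u"
  unfolding T_def by (simp add: sum_negf)

lemma hexp_add: "hexp f F \<Longrightarrow> hexp g G \<Longrightarrow> hexp (\<lambda>u. f u + g u) (F + G)"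
  unfolding hexp_def hexpN_def T_add
proof (intro allI)
  fix N assume a1: "\<forall>N. (\<lambda>u. f u - T N F u) \<in> o[nhds 0](\<lambda>u. u ^ N)"
    and a2: "\<forall>N. (\<lambda>u. g u - T N G u) \<in> o[nhds 0](\<lambda>u. u ^ N)"
  have "(\<lambda>u. (f u - T N F u) + (g u - T N G u)) \<in> o[nhds 0](\<lambda>u. u ^ N)"
    by (rule sum_in_smallo(1)[OF a1[rule_format] a2[rule_format]])
  thus "(\<lambda>u. f u + g u - (T N F u + T N G u)) \<in> o[nhds 0](\<lambda>u. u ^ N)"
    by (simp add: algebra_simps)
qed

lemma hexp_diff: "hexp f F \<Longrightarrow> hexp g G \<Longrightarrow> hexp (\<lambda>u. f u - g u) (F - G)"
  unfolding hexp_def hexpN_def T_diff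
proof (intro allI)
  fix N assume a1: "\<forall>N. (\<lambda>u. f u - T N F u) \<in> o[nhds 0](\<lambda>u. u ^ N)"
    and a2: "\<forall>N. (\<lambda>u. g u - T N G u) \<in> o[nhds 0](\<lambda>u. u ^ N)"
  have "(\<lambda>u. (f u - T N F u) - (g u - T N G u)) \<in> o[nhds 0](\<lambda>u. u ^ N)"
    by (rule sum_in_smallo(2)[OF a1[rule_format] a2[rule_format]])
  thus "(\<lambda>u. f u - g u - (T N F u - T N G u)) \<in> o[nhds 0](\<lambda>u. u ^ N)"
    by (simp add: algebra_simps)
qed


lemma smallo_ev_cong:
  assumes "f \<in> o[F](h)" "eventually (\<lambda>x. f x = g x) F"
  shows "g \<in> o[F](h)"
  using landau_o.small.cong_ex[of f g F h h] assms by auto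

lemma poly_smallo:
  assumes "\<And>j. j \<le> N \<Longrightarrow> coeff p j = 0"
  shows "(\<lambda>u::real. poly p u) \<in> o[nhds 0](\<lambda>u. u ^ N)"
proof -
  have "(\<lambda>u. \<Sum>i\<le>degree p. coeff p i * u ^ i) \<in> o[nhds 0](\<lambda>u. u ^ N)"
  proof (rule big_sum_in_smallo)
    fix i assume "i \<in> {..degree p}"
    show "(\<lambda>u. coeff p i * u ^ i) \<in> o[nhds 0](\<lambda>u. u ^ N)"
    proof (cases "i \<le> N")
      case True thus ?thesis using assms[of i] by (simp add: zero_in_smallo)
    next
      case False thus ?thesis by (intro pow_small) auto
    qed
  qed
  thus ?thesis by (simp add: poly_altdef)
qed

definition PT :: "nat \<Rightarrow> real fps \<Rightarrow> real poly" where
  "PT N F = (\<Sum>j\<le>N. monom (fps_nth F j) j)"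

lemma poly_PT: "poly (PT N F) u = T N F u"
  unfolding PT_def T_def by (simp add: poly_sum poly_monom)

lemma coeff_PT: "coeff (PT N F) k = (if k \<le> N then fps_nth F k else 0)"
  unfolding PT_def by (simp add: coeff_sum coeff_monom)

lemma T_mult_smallo:
  "(\<lambda>u. T N F u * T N G u - T N (F * G) u) \<in> o[nhds 0](\<lambda>u. u ^ N)"
proof -
  have "(\<lambda>u. poly (PT N F * PT N G - PT N (F * G)) u) \<in> o[nhds 0](\<lambda>u. u ^ N)"
  proof (rule poly_smallo)
    fix j assume j: "j \<le> N"
    have "coeff (PT N F * PT N G) j = (\<Sum>i\<le>j. fps_nth F i * fps_nth G (j - i))"
      unfolding coeff_mult using j by (intro sum.cong) (auto simp: coeff_PT)
    thus "coeff (PT N F * PT N G - PT N (F * G)) j = 0"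
      using j by (simp add: coeff_PT fps_mult_nth atLeast0AtMost)
  qed
  thus ?thesis by (simp add: poly_PT)
qed

lemma T0: "T 0 F u = fps_nth F 0"
  unfolding T_def by simp

lemma hexp_tendsto: "hexp f F \<Longrightarrow> (f \<longlongrightarrow> fps_nth F 0) (nhds 0)"
  unfolding hexp_def hexpN_def
  by (drule spec[of _ 0]) (auto simp: T0 dest!: smalloD_tendsto intro: LIM_zero_cancel)

lemma tendsto_bigo1:
  assumes "(h \<longlongrightarrow> (l::real)) F"
  shows "h \<in> O[F](\<lambda>_. 1)"
proof (rule bigoI[where c = "\<bar>l\<bar> + 1"])
  show "\<forall>\<^sub>F x in F. norm (h x) \<le> (\<bar>l\<bar> + 1) * norm (1::real)"
    using tendstoD[OF assms zero_less_one]
    by eventually_elim (auto simp: dist_real_def)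
qed

lemma hexp_bigo1: "hexp f F \<Longrightarrow> f \<in> O[nhds 0](\<lambda>_. 1)"
  by (rule tendsto_bigo1[OF hexp_tendsto])

lemma hexp_mult:
  assumes "hexp f F" "hexp g G"
  shows "hexp (\<lambda>u. f u * g u) (F * G)"
  unfolding hexp_def hexpN_def
proof
  fix N
  have a1: "(\<lambda>u. f u - T N F u) \<in> o[nhds 0](\<lambda>u. u ^ N)"
    and a2: "(\<lambda>u. g u - T N G u) \<in> o[nhds 0](\<lambda>u. u ^ N)"
    using assms unfolding hexp_def hexpN_def by auto
  have A: "(\<lambda>u. (f u - T N F u) * g u) \<in> o[nhds 0](\<lambda>u. u ^ N)"
    by (rule landau_o.small_1_mult[OF a1 hexp_bigo1[OF assms(2)]])
  have B: "(\<lambda>u. (g u - T N G u) * T N F u) \<in> o[nhds 0](\<lambda>u. u ^ N)"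
    by (rule landau_o.small_1_mult[OF a2 T_bigo1])
  have "(\<lambda>u. (f u - T N F u) * g u + (g u - T N G u) * T N F u
          + (T N F u * T N G u - T N (F * G) u)) \<in> o[nhds 0](\<lambda>u. u ^ N)"
    by (intro sum_in_smallo(1)[OF sum_in_smallo(1)[OF A B] T_mult_smallo])
  moreover have "(\<lambda>u. (f u - T N F u) * g u + (g u - T N G u) * T N F u
          + (T N F u * T N G u - T N (F * G) u)) = (\<lambda>u. f u * g u - T N (F * G) u)"
    by (rule ext) (simp add: algebra_simps)
  ultimately show "(\<lambda>u. f u * g u - T N (F * G) u) \<in> o[nhds 0](\<lambda>u. u ^ N)" by simp
qed

lemma hexp_inverse:
  assumes "hexp f F" "fps_nth F 0 \<noteq> 0"
  shows "hexp (\<lambda>u. inverse (f u)) (inverse F)"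
  unfolding hexp_def hexpN_def
proof
  fix N
  have lim: "(f \<longlongrightarrow> fps_nth F 0) (nhds 0)" by (rule hexp_tendsto[OF assms(1)])
  have ne: "eventually (\<lambda>u. f u \<noteq> 0) (nhds 0)"
    using tendsto_imp_eventually_ne[OF lim assms(2)] .
  have bi: "(\<lambda>u. inverse (f u)) \<in> O[nhds 0](\<lambda>_. 1)"
    by (rule tendsto_bigo1[OF tendsto_inverse[OF lim assms(2)]])
  have a1: "(\<lambda>u. f u - T N F u) \<in> o[nhds 0](\<lambda>u. u ^ N)"
    using assms unfolding hexp_def hexpN_def by auto
  have A: "(\<lambda>u. (f u - T N F u) * T N (inverse F) u) \<in> o[nhds 0](\<lambda>u. u ^ N)"
    by (rule landau_o.small_1_mult[OF a1 T_bigo1])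
  have B: "(\<lambda>u. T N F u * T N (inverse F) u - 1) \<in> o[nhds 0](\<lambda>u. u ^ N)"
    using T_mult_smallo[of N F "inverse F"] by (simp add: inverse_mult_eq_1'[OF assms(2)] T_one)
  have C: "(\<lambda>u. ((f u - T N F u) * T N (inverse F) u + (T N F u * T N (inverse F) u - 1))
       * inverse (f u)) \<in> o[nhds 0](\<lambda>u. u ^ N)"
    by (rule landau_o.small_1_mult[OF sum_in_smallo(1)[OF A B] bi])
  hence C': "(\<lambda>u. - (((f u - T N F u) * T N (inverse F) u + (T N F u * T N (inverse F) u - 1))
       * inverse (f u))) \<in> o[nhds 0](\<lambda>u. u ^ N)"
    by (simp only: landau_o.small.uminus_in_iff)
  show "(\<lambda>u. inverse (f u) - T N (inverse F) u) \<in> o[nhds 0](\<lambda>u. u ^ N)"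
    using C'
  proof (rule smallo_ev_cong)
    show "\<forall>\<^sub>F x in nhds 0. - (((f x - T N F x) * T N (inverse F) x + (T N F x * T N (inverse F) x - 1))
       * inverse (f x)) = inverse (f x) - T N (inverse F) x"
      using ne by eventually_elim (simp add: field_simps)
  qed
qed

lemma hexp_power: "hexp f F \<Longrightarrow> hexp (\<lambda>u. f u ^ n) (F ^ n)"
proof (induction n)
  case 0
  thus ?case using hexp_const[of 1] by simp
next
  case (Suc n)
  thus ?case using hexp_mult[OF Suc.prems Suc.IH] by simp
qed

lemma hexp_cmult: "hexp f F \<Longrightarrow> hexp (\<lambda>u. c * f u) (fps_const c * F)"
  using hexp_mult[OF hexp_const] by blast

lemma hexp_sum:
  assumes "finite A" "\<And>n. n \<in> A \<Longrightarrow> hexp (f n) (Fs n)"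
  shows "hexp (\<lambda>u. \<Sum>n\<in>A. f n u) (\<Sum>n\<in>A. Fs n)"
  using assms
proof (induction A rule: finite_induct)
  case empty
  thus ?case using hexp_const[of 0] by simp
next
  case (insert x A)
  have "hexp (\<lambda>u. f x u + (\<Sum>n\<in>A. f n u)) (Fs x + (\<Sum>n\<in>A. Fs n))"
    using insert by (intro hexp_add) auto
  thus ?case using insert by simp
qed

lemma term_neg: "c * (- u::real) ^ j = ((-1) ^ j * c) * u ^ j"
proof -
  have "(- u) ^ j = (-1) ^ j * u ^ j" by (rule power_minus)
  thus ?thesis by simp
qed

lemma hexp_neg:
  assumes "hexp f F"
  shows "hexp (\<lambda>u. f (- u)) (Abs_fps (\<lambda>j. (-1) ^ j * fps_nth F j))"
  unfolding hexp_def hexpN_def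
proof
  fix N
  define F' where "F' = Abs_fps (\<lambda>j. (-1) ^ j * fps_nth F j)"
  have lim0: "((\<lambda>u::real. - u) \<longlongrightarrow> - 0) (nhds 0)"
    by (rule tendsto_minus[OF filterlim_ident])
  have lim: "filterlim (\<lambda>u::real. - u) (nhds 0) (nhds 0)"
    using lim0 by (simp only: minus_zero)
  have a: "(\<lambda>u. f u - T N F u) \<in> o[nhds 0](\<lambda>u. u ^ N)"
    using assms unfolding hexp_def hexpN_def by auto
  have b: "(\<lambda>u. f (- u) - T N F (- u)) \<in> o[nhds 0](\<lambda>u. (- u) ^ N)"
    using landau_o.small.compose[OF a lim] by simp
  have e1: "(\<lambda>u::real. (- u) ^ N) = (\<lambda>u. (-1) ^ N * u ^ N)"
    by (rule ext) (rule power_minus)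
  have e2: "(\<lambda>u. f (- u) - T N F (- u)) = (\<lambda>u. f (- u) - T N F' u)"
    unfolding T_def F'_def by (intro ext arg_cong2[where f = "(-)"] refl sum.cong) (auto simp only: term_neg fps_nth_Abs_fps)
  have e3: "o[nhds 0](\<lambda>u. (-1::real) ^ N * u ^ N) = o[nhds 0](\<lambda>u. u ^ N)"
    by (rule landau_o.small.cmult) simp
  show "(\<lambda>u. f (- u) - T N (Abs_fps (\<lambda>j. (-1) ^ j * fps_nth F j)) u) \<in> o[nhds 0](\<lambda>u. u ^ N)"
    using b unfolding e1 e2 e3 F'_def .
qed

lemma hexp_unique:
  assumes "hexp f F" "hexp f G"
  shows "F = G"
proof -
  have "\<forall>i<j. fps_nth F i = fps_nth G i" for j
  proof (induction j)
    case 0 thus ?case by simp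
  next
    case (Suc j)
    have d1: "(\<lambda>u. f u - T j F u) \<in> o[nhds 0](\<lambda>u. u ^ j)"
      and d2: "(\<lambda>u. f u - T j G u) \<in> o[nhds 0](\<lambda>u. u ^ j)"
      using assms unfolding hexp_def hexpN_def by auto
    have "(\<lambda>u. (f u - T j F u) - (f u - T j G u)) \<in> o[nhds 0](\<lambda>u. u ^ j)"
      by (rule sum_in_smallo(2)[OF d1 d2])
    moreover have "\<And>u. (f u - T j F u) - (f u - T j G u) = (fps_nth G j - fps_nth F j) * u ^ j"
    proof -
      fix u
      have "(f u - T j F u) - (f u - T j G u) = (\<Sum>i\<le>j. (fps_nth G i - fps_nth F i) * u ^ i)"
        unfolding T_def by (simp add: sum_subtractf algebra_simps)
      also have "\<dots> = (\<Sum>i\<le>j. if i = j then (fps_nth G j - fps_nth F j) * u ^ j else 0)"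
        using Suc.IH by (intro sum.cong) auto
      finally show "(f u - T j F u) - (f u - T j G u) = (fps_nth G j - fps_nth F j) * u ^ j"
        by simp
    qed
    ultimately have sm: "(\<lambda>u. (fps_nth G j - fps_nth F j) * u ^ j) \<in> o[nhds 0](\<lambda>u. u ^ j)"
      by simp
    have "fps_nth F j = fps_nth G j"
    proof (rule ccontr)
      assume "fps_nth F j \<noteq> fps_nth G j"
      hence "(\<lambda>u::real. u ^ j) \<in> o[nhds 0](\<lambda>u. u ^ j)"
        using sm by (subst (asm) landau_o.small.cmult_in_iff) auto
      hence "eventually (\<lambda>u::real. u ^ j = 0) (nhds 0)"
        by (simp add: landau_o.small_refl_iff)
      then obtain d where "d > 0" "\<And>x::real. dist x 0 < d \<Longrightarrow> x ^ j = 0"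
        unfolding eventually_nhds_metric by blast
      from this(2)[of "d/2"] \<open>d > 0\<close> show False by (simp add: dist_real_def)
    qed
    thus ?case using Suc.IH less_Suc_eq by auto
  qed
  thus ?thesis by (intro fps_ext) auto
qed

lemma dpow: "(B::real fps) * fps_deriv (B ^ a) = fps_const (of_nat a) * fps_deriv B * B ^ a"
proof (induction a)
  case 0 thus ?case by simp
next
  case (Suc a)
  have "B * fps_deriv (B ^ Suc a) = B * fps_deriv B * B ^ a + B * (B * fps_deriv (B ^ a))"
    by (simp add: fps_deriv_mult algebra_simps)
  also have "\<dots> = B * fps_deriv B * B ^ a + B * (fps_const (of_nat a) * fps_deriv B * B ^ a)"
    using Suc.IH by simp
  also have "\<dots> = (1 + fps_const (of_nat a)) * fps_deriv B * (B * B ^ a)"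
    by (simp add: algebra_simps)
  also have "1 + fps_const (of_nat a) = fps_const (of_nat (Suc a) :: real)"
    by (simp add: fps_const_add[symmetric])
  finally show ?case by simp
qed

lemma dinv:
  assumes "fps_nth (B::real fps) 0 \<noteq> 0"
  shows "B * fps_deriv (inverse B ^ c) = - fps_const (of_nat c) * fps_deriv B * inverse B ^ c"
proof (induction c)
  case 0 thus ?case by simp
next
  case (Suc c)
  have BI: "B * inverse B = 1" using assms by (rule inverse_mult_eq_1')
  have D: "B * fps_deriv (inverse B) = - fps_deriv B * inverse B"
  proof -
    have "B * fps_deriv (inverse B) = - fps_deriv B * (B * inverse B) * inverse B"
      using fps_inverse_deriv[OF assms] by (simp add: power2_eq_square algebra_simps)
    thus ?thesis using BI by simp
  qed
  have "B * fps_deriv (inverse B ^ Suc c) =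
        (B * fps_deriv (inverse B)) * inverse B ^ c + inverse B * (B * fps_deriv (inverse B ^ c))"
    by (simp add: fps_deriv_mult algebra_simps)
  also have "\<dots> = (- fps_deriv B * inverse B) * inverse B ^ c
      + inverse B * (- fps_const (of_nat c) * fps_deriv B * inverse B ^ c)"
    using Suc.IH D by simp
  also have "\<dots> = - (1 + fps_const (of_nat c)) * fps_deriv B * (inverse B * inverse B ^ c)"
    by (simp add: algebra_simps)
  also have "1 + fps_const (of_nat c) = fps_const (of_nat (Suc c) :: real)"
    by (simp add: fps_const_add[symmetric])
  finally show ?case by simp
qed

lemma dQ:
  assumes "fps_nth (B::real fps) 0 \<noteq> 0"
  shows "B * fps_deriv (B ^ a * inverse B ^ c) =
         fps_const (real a - real c) * fps_deriv B * (B ^ a * inverse B ^ c)"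
proof -
  have "B * fps_deriv (B ^ a * inverse B ^ c) =
        (B * fps_deriv (B ^ a)) * inverse B ^ c + B ^ a * (B * fps_deriv (inverse B ^ c))"
    by (simp add: fps_deriv_mult algebra_simps)
  also have "\<dots> = fps_const (of_nat a) * fps_deriv B * B ^ a * inverse B ^ c
       + B ^ a * (- fps_const (of_nat c) * fps_deriv B * inverse B ^ c)"
    by (simp add: dpow dinv[OF assms])
  also have "\<dots> = (fps_const (of_nat a) - fps_const (of_nat c)) * fps_deriv B * (B ^ a * inverse B ^ c)"
    by algebra
  also have "fps_const (of_nat a) - fps_const (of_nat c) = fps_const (real a - real c)"
    by (simp add: fps_const_sub)
  finally show ?thesis .
qed

lemma rec_Q:
  fixes b :: "nat \<Rightarrow> real" and r :: real and Q :: "real fps"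
  assumes D: "Abs_fps b * fps_deriv Q = fps_const r * fps_deriv (Abs_fps b) * Q"
  shows "real (Suc m) * b 0 * fps_nth Q (Suc m) =
     (\<Sum>k = 1..Suc m. (real k * (1 + r) - real (Suc m)) * b k * fps_nth Q (Suc m - k))"
proof -
  have L: "fps_nth (Abs_fps b * fps_deriv Q) m =
        (\<Sum>i = 0..m. b i * (real (m - i + 1) * fps_nth Q (m - i + 1)))"
    by (simp add: fps_mult_nth fps_deriv_nth mult.assoc)
  also have "\<dots> = b 0 * (real (Suc m) * fps_nth Q (Suc m)) +
        (\<Sum>k = 1..Suc m. real (Suc m - k) * b k * fps_nth Q (Suc m - k))"
  proof -
    have ins: "{0..m} = insert 0 {1..m}" by auto
    have "(\<Sum>i = 0..m. b i * (real (m - i + 1) * fps_nth Q (m - i + 1))) =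
          b 0 * (real (Suc m) * fps_nth Q (Suc m)) +
          (\<Sum>i = 1..m. b i * (real (m - i + 1) * fps_nth Q (m - i + 1)))"
      by (subst ins) (simp add: sum.insert)
    also have "(\<Sum>i = 1..m. b i * (real (m - i + 1) * fps_nth Q (m - i + 1))) =
               (\<Sum>k = 1..m. real (Suc m - k) * b k * fps_nth Q (Suc m - k))"
      by (intro sum.cong) (auto simp: Suc_diff_le)
    also have "\<dots> = (\<Sum>k = 1..Suc m. real (Suc m - k) * b k * fps_nth Q (Suc m - k))"
      by simp
    finally show ?thesis .
  qed
  finally have L': "fps_nth (Abs_fps b * fps_deriv Q) m = b 0 * (real (Suc m) * fps_nth Q (Suc m)) +
        (\<Sum>k = 1..Suc m. real (Suc m - k) * b k * fps_nth Q (Suc m - k))" .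
  have "fps_nth (fps_const r * fps_deriv (Abs_fps b) * Q) m =
        r * (\<Sum>i = 0..m. (real (i + 1) * b (i + 1)) * fps_nth Q (m - i))"
    by (simp only: mult.assoc fps_mult_left_const_nth) (simp add: fps_mult_nth fps_deriv_nth mult.assoc)
  also have "(\<Sum>i = 0..m. (real (i + 1) * b (i + 1)) * fps_nth Q (m - i)) =
             (\<Sum>k = 1..Suc m. real k * b k * fps_nth Q (Suc m - k))"
    using sum.atLeast_Suc_atMost_Suc_shift[of "\<lambda>k. real k * b k * fps_nth Q (Suc m - k)" 0 m]
    by (simp add: o_def)
  finally have R': "fps_nth (fps_const r * fps_deriv (Abs_fps b) * Q) m =
       r * (\<Sum>k = 1..Suc m. real k * b k * fps_nth Q (Suc m - k))" .
  from D have "fps_nth (Abs_fps b * fps_deriv Q) m = fps_nth (fps_const r * fps_deriv (Abs_fps b) * Q) m"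
    by simp
  hence E: "b 0 * (real (Suc m) * fps_nth Q (Suc m)) =
      r * (\<Sum>k = 1..Suc m. real k * b k * fps_nth Q (Suc m - k))
      - (\<Sum>k = 1..Suc m. real (Suc m - k) * b k * fps_nth Q (Suc m - k))"
    unfolding L' R' by linarith
  also have "\<dots> = (\<Sum>k = 1..Suc m. (real k * (1 + r) - real (Suc m)) * b k * fps_nth Q (Suc m - k))"
    unfolding sum_distrib_left sum_subtractf[symmetric]
    by (intro sum.cong) (auto simp: of_nat_diff algebra_simps)
  finally show ?thesis by (simp add: algebra_simps)
qed

lemma P_fps:
  assumes b0: "b 0 > 0"
  shows "P n (real a - real c) b = fps_nth (Abs_fps b ^ a * inverse (Abs_fps b) ^ c) n"
proof -
  define Q where "Q = Abs_fps b ^ a * inverse (Abs_fps b) ^ c"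
  define r where "r = real a - real c"
  have nz: "fps_nth (Abs_fps b) 0 \<noteq> 0" using b0 by simp
  have D: "Abs_fps b * fps_deriv Q = fps_const r * fps_deriv (Abs_fps b) * Q"
    unfolding Q_def r_def by (rule dQ[OF nz])
  have "P n r b = fps_nth Q n"
  proof (induction n rule: less_induct)
    case (less n)
    show ?case
    proof (cases n)
      case 0
      have "b 0 powr r = b 0 ^ a / b 0 ^ c"
        unfolding r_def using b0 by (simp add: powr_diff powr_realpow)
      thus ?thesis using 0 unfolding Q_def
        by (simp add: fps_nth_power_0 fps_inverse_nth_0 field_simps)
    next
      case (Suc m)
      have "P n r b = 1 / (real (Suc m) * b 0) *
         (\<Sum>k = 1..Suc m. (real k * (1 + r) - real (Suc m)) * b k * fps_nth Q (Suc m - k))"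
        unfolding Suc P.simps using less.IH Suc by (intro arg_cong2[where f = "(*)"] refl sum.cong) auto
      also have "\<dots> = fps_nth Q (Suc m)"
        unfolding rec_Q[OF D, symmetric] using b0 by simp
      finally show ?thesis using Suc by simp
    qed
  qed
  thus ?thesis unfolding Q_def r_def .
qed

definition E :: "(nat \<Rightarrow> real) \<Rightarrow> real fps" where
  "E a = Abs_fps (\<lambda>j. if even j then a (j div 2) else 0)"

lemma sum_even:
  fixes N :: nat
  shows "(\<Sum>j\<le>2*N. (if even j then f (j div 2) else 0)) = (\<Sum>n\<le>N. (f n :: 'a::comm_monoid_add))"
proof (induction N)
  case 0 thus ?case by simp
next
  case (Suc N)
  have e: "2 * Suc N = Suc (Suc (2 * N))" by simp
  show ?case unfolding e sum.atMost_Suc using Suc by simp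
qed

lemma T_E: "T (2*N) (E a) u = (\<Sum>n\<le>N. a n * u ^ (2*n))"
proof -
  have "T (2*N) (E a) u = (\<Sum>j\<le>2*N. (if even j then a (j div 2) * u ^ (2 * (j div 2)) else 0))"
    unfolding T_def E_def by (intro sum.cong) auto
  also have "\<dots> = (\<Sum>n\<le>N. a n * u ^ (2*n))" by (rule sum_even)
  finally show ?thesis .
qed

lemma T_at0: "T N F 0 = fps_nth F 0"
proof -
  have "T N F 0 = (\<Sum>j\<le>N. (if j = 0 then fps_nth F 0 else 0))"
    unfolding T_def by (intro sum.cong) auto
  thus ?thesis by simp
qed

lemma mean_diag: "is_mean M \<Longrightarrow> x > 0 \<Longrightarrow> M x x = x"
  unfolding is_mean_def by (metis min.idem max.idem order_antisym)

lemma a0_one: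
  assumes mean: "is_mean M" and ex: "has_sym_expansion M a"
  shows "a 0 = 1"
proof (rule ccontr)
  assume ne: "a 0 \<noteq> 1"
  from ex have "(\<lambda>x. M (x - 0) (x + 0) - (\<Sum>n\<le>0. a n * 0 ^ (2 * n) * x powr (1 - 2 * real n)))
      \<in> o[at_top](\<lambda>x. x powr (1 - 2 * real (0::nat)))"
    unfolding has_sym_expansion_def by blast
  hence h: "(\<lambda>x. M x x - a 0 * x powr 1) \<in> o[at_top](\<lambda>x. x powr 1)" by simp
  have ev: "eventually (\<lambda>x::real. x > 0) at_top" by (rule eventually_gt_at_top)
  have "(\<lambda>x. (1 - a 0) * x) \<in> o[at_top](\<lambda>x. x)"
  proof -
    have "((\<lambda>x. M x x - a 0 * x powr 1) \<in> o[at_top](\<lambda>x. x powr 1)) =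
          ((\<lambda>x. (1 - a 0) * x) \<in> o[at_top](\<lambda>x. x))"
      by (rule landau_o.small.cong_ex; use ev in eventually_elim)
         (auto simp: mean_diag[OF mean] algebra_simps)
    thus ?thesis using h by simp
  qed
  hence "(\<lambda>x::real. x) \<in> o[at_top](\<lambda>x. x)"
    using ne by (subst (asm) landau_o.small.cmult_in_iff) auto
  hence "eventually (\<lambda>x::real. x = 0) at_top" by (simp add: landau_o.small_refl_iff)
  then obtain N where "\<And>x::real. x \<ge> N \<Longrightarrow> x = 0" unfolding eventually_at_top_linorder by blast
  from this[of "max N 1"] show False by simp
qed

lemma at_to_nhds:
  fixes f g :: "real \<Rightarrow> real"
  assumes "f \<in> o[at 0](g)" "f 0 = 0"
  shows "f \<in> o[nhds 0](g)"
proof (rule landau_o.smallI)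
  fix c :: real assume c: "c > 0"
  have "eventually (\<lambda>x. norm (f x) \<le> c * norm (g x)) (at 0)"
    using landau_o.smallD[OF assms(1) c] .
  hence "eventually (\<lambda>x. x \<noteq> 0 \<longrightarrow> norm (f x) \<le> c * norm (g x)) (nhds 0)"
    by (simp add: eventually_at_filter)
  thus "eventually (\<lambda>x. norm (f x) \<le> c * norm (g x)) (nhds 0)"
    by eventually_elim (use assms(2) c in auto)
qed

lemma powr_inv:
  assumes "u > 0"
  shows "inverse u powr (1 - 2 * real n) = inverse u * u ^ (2 * n)"
proof -
  have "inverse u powr (1 - 2 * real n) = inverse u powr 1 / inverse u powr (real (2 * n))"
    by (simp add: powr_diff)
  also have "\<dots> = inverse u / inverse u ^ (2 * n)"
    using assms powr_realpow[of "inverse u" "2 * n"] by simp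
  also have "\<dots> = inverse u * u ^ (2 * n)"
    by (simp add: power_inverse field_simps)
  finally show ?thesis .
qed

lemma conv_hexp:
  assumes mean: "is_mean M" and sym: "symmetric_mean M" and hom: "homogeneous_mean M"
      and ex: "has_sym_expansion M a"
  shows "hexp (\<lambda>u. M (1 - u) (1 + u)) (E a)"
proof (rule hexp_intro)
  fix N :: nat
  define f where "f = (\<lambda>u. M (1 - u) (1 + u))"
  define S where "S = (\<lambda>u. T (2*N) (E a) u)"
  have a0: "a 0 = 1" by (rule a0_one[OF mean ex])
  from ex have ex1: "(\<lambda>x. M (x - 1) (x + 1) - (\<Sum>n\<le>N. a n * 1 ^ (2 * n) * x powr (1 - 2 * real n)))
      \<in> o[at_top](\<lambda>x. x powr (1 - 2 * real N))"
    unfolding has_sym_expansion_def by blast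
  have c1: "(\<lambda>u. M (inverse u - 1) (inverse u + 1) -
      (\<Sum>n\<le>N. a n * 1 ^ (2 * n) * inverse u powr (1 - 2 * real n)))
      \<in> o[at_right 0](\<lambda>u. inverse u powr (1 - 2 * real N))"
    using landau_o.small.compose[OF ex1 filterlim_inverse_at_top_right] by simp
  have evr: "eventually (\<lambda>u::real. u \<in> {0<..<1}) (at_right 0)"
    by (rule eventually_at_right_real) simp
  have c2: "(\<lambda>u. inverse u * (f u - S u)) \<in> o[at_right 0](\<lambda>u. inverse u * u ^ (2 * N))"
  proof -
    have "((\<lambda>u. M (inverse u - 1) (inverse u + 1) -
      (\<Sum>n\<le>N. a n * 1 ^ (2 * n) * inverse u powr (1 - 2 * real n)))
      \<in> o[at_right 0](\<lambda>u. inverse u powr (1 - 2 * real N))) =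
      ((\<lambda>u. inverse u * (f u - S u)) \<in> o[at_right 0](\<lambda>u. inverse u * u ^ (2 * N)))"
    proof (rule landau_o.small.cong_ex; use evr in eventually_elim)
      fix u :: real assume u: "u \<in> {0<..<1}"
      have "M (inverse u - 1) (inverse u + 1) = M (inverse u * (1 - u)) (inverse u * (1 + u))"
        using u by (simp add: field_simps)
      also have "\<dots> = inverse u * f u"
        using hom u unfolding homogeneous_mean_def f_def by auto
      finally have A: "M (inverse u - 1) (inverse u + 1) = inverse u * f u" .
      have B: "(\<Sum>n\<le>N. a n * 1 ^ (2 * n) * inverse u powr (1 - 2 * real n)) = inverse u * S u"
        unfolding S_def T_E sum_distrib_left using u by (intro sum.cong) (auto simp: powr_inv)
      show "M (inverse u - 1) (inverse u + 1) -
          (\<Sum>n\<le>N. a n * 1 ^ (2 * n) * inverse u powr (1 - 2 * real n)) = inverse u * (f u - S u)"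
        unfolding A B by (simp add: algebra_simps)
      show "inverse u powr (1 - 2 * real N) = inverse u * u ^ (2 * N)"
        using u by (simp add: powr_inv)
    qed
    thus ?thesis using c1 by simp
  qed
  have right: "(\<lambda>u. f u - S u) \<in> o[at_right 0](\<lambda>u. u ^ (2 * N))"
  proof -
    have "(\<lambda>u. inverse u * (f u - S u) * u) \<in> o[at_right 0](\<lambda>u. inverse u * u ^ (2 * N) * u)"
      by (rule landau_o.small.mult_right[OF c2])
    moreover have "((\<lambda>u. inverse u * (f u - S u) * u) \<in> o[at_right 0](\<lambda>u. inverse u * u ^ (2 * N) * u))
       = ((\<lambda>u. f u - S u) \<in> o[at_right 0](\<lambda>u. u ^ (2 * N)))"
      by (rule landau_o.small.cong_ex; use evr in eventually_elim) auto
    ultimately show ?thesis by simp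
  qed
  have limm: "filterlim (\<lambda>u::real. - u) (at_right 0) (at_left 0)"
    by (simp add: filterlim_at_left_to_right filterlim_ident)
  have left: "(\<lambda>u. f u - S u) \<in> o[at_left 0](\<lambda>u. u ^ (2 * N))"
  proof -
    have l1: "(\<lambda>u. f (- u) - S (- u)) \<in> o[at_left 0](\<lambda>u. (- u) ^ (2 * N))"
      using landau_o.small.compose[OF right limm] by simp
    have evl: "eventually (\<lambda>u::real. u \<in> {-1<..<0}) (at_left 0)"
      by (rule eventually_at_left_real) simp
    have "((\<lambda>u. f (- u) - S (- u)) \<in> o[at_left 0](\<lambda>u. (- u) ^ (2 * N))) =
          ((\<lambda>u. f u - S u) \<in> o[at_left 0](\<lambda>u. u ^ (2 * N)))"
    proof (rule landau_o.small.cong_ex; use evl in eventually_elim)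
      fix u :: real assume u: "u \<in> {-1<..<0}"
      have "f (- u) = f u"
        using sym u unfolding f_def symmetric_mean_def by auto
      moreover have "S (- u) = S u" unfolding S_def T_E by simp
      ultimately show "f (- u) - S (- u) = f u - S u" by simp
      show "(- u) ^ (2 * N) = u ^ (2 * N)" by simp
    qed
    thus ?thesis using l1 by simp
  qed
  have "(\<lambda>u. f u - S u) \<in> o[at 0](\<lambda>u. u ^ (2 * N))"
    unfolding at_eq_sup_left_right by (rule landau_o.small.sup[OF left right])
  moreover have "f 0 - S 0 = 0"
    unfolding f_def S_def T_at0 by (simp add: E_def a0 mean_diag[OF mean])
  ultimately have "(\<lambda>u. f u - S u) \<in> o[nhds 0](\<lambda>u. u ^ (2 * N))"
    by (rule at_to_nhds)
  hence "hexpN (2 * N) (\<lambda>u. M (1 - u) (1 + u)) (E a)"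
    unfolding hexpN_def f_def S_def .
  thus "\<exists>K\<ge>N. hexpN K (\<lambda>u. M (1 - u) (1 + u)) (E a)" by (intro exI[of _ "2*N"]) auto
qed

lemma bigo_lin: "(\<lambda>u::real. d * u) \<in> O[F](\<lambda>u. u)"
  by (rule bigoI[where c = "\<bar>d\<bar>"]) (simp add: abs_mult)

lemma core:
  fixes K :: "real \<Rightarrow> real \<Rightarrow> real" and c \<delta> :: "real \<Rightarrow> real"
  assumes hom: "homogeneous_mean K"
    and exK: "hexp (\<lambda>w. K (1 - w) (1 + w)) (E aK)"
    and hc: "hexp c C" and C0: "fps_nth C 0 > 0"
    and hd: "hexp \<delta> (fps_X * D)"
  shows "hexp (\<lambda>u. K (c u - \<delta> u) (c u + \<delta> u))
     (Abs_fps (\<lambda>j. \<Sum>n\<le>j. aK n * fps_nth (fps_X ^ (2*n) * (C * D ^ (2*n) * inverse C ^ (2*n))) j))"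
    (is "hexp _ ?W")
proof -
  define fK where "fK = (\<lambda>w. K (1 - w) (1 + w))"
  define v where "v = (\<lambda>u. \<delta> u / c u)"
  have limc: "(c \<longlongrightarrow> fps_nth C 0) (nhds 0)" by (rule hexp_tendsto[OF hc])
  have limd: "(\<delta> \<longlongrightarrow> 0) (nhds 0)" using hexp_tendsto[OF hd] by simp
  have limv: "(v \<longlongrightarrow> 0) (nhds 0)"
    unfolding v_def using tendsto_divide[OF limd limc] C0 by simp
  have evc: "eventually (\<lambda>u. c u > 0) (nhds 0)" using order_tendstoD(1)[OF limc C0] .
  have evv1: "eventually (\<lambda>u. v u < 1) (nhds 0)" using order_tendstoD(2)[OF limv] by simp
  have evv2: "eventually (\<lambda>u. v u > -1) (nhds 0)" using order_tendstoD(1)[OF limv] by simp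
  have eq1: "eventually (\<lambda>u. K (c u - \<delta> u) (c u + \<delta> u) = c u * fK (v u)) (nhds 0)"
    using evc evv1 evv2
  proof eventually_elim
    case (elim u)
    have a1: "c u * (1 - v u) = c u - \<delta> u" and a2: "c u * (1 + v u) = c u + \<delta> u"
      using elim unfolding v_def by (simp_all add: field_simps)
    have "K (c u - \<delta> u) (c u + \<delta> u) = K (c u * (1 - v u)) (c u * (1 + v u))"
      unfolding a1 a2 ..
    also have "\<dots> = c u * fK (v u)"
      using hom elim unfolding homogeneous_mean_def fK_def by auto
    finally show ?case .
  qed
  define Tm where "Tm = (\<lambda>n. C * (fps_X * D) ^ (2*n) * inverse C ^ (2*n))"
  have hterm: "hexp (\<lambda>u. c u * \<delta> u ^ (2*n) * inverse (c u) ^ (2*n)) (Tm n)" for n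
    unfolding Tm_def using C0
    by (intro hexp_mult hexp_power hexp_inverse hc hd) auto
  have main: "hexp (\<lambda>u. c u * fK (v u)) ?W"
  proof (rule hexp_intro)
    fix J :: nat
    define r where "r = (\<lambda>w. fK w - (\<Sum>n\<le>J. aK n * w ^ (2*n)))"
    have r0: "r \<in> o[nhds 0](\<lambda>w. w ^ (2*J))"
    proof -
      have "(\<lambda>u. K (1 - u) (1 + u) - T (2*J) (E aK) u) \<in> o[nhds 0](\<lambda>u. u ^ (2*J))"
        using exK unfolding hexp_def hexpN_def by blast
      thus ?thesis unfolding r_def fK_def T_E .
    qed
    have rv: "(\<lambda>u. r (v u)) \<in> o[nhds 0](\<lambda>u. v u ^ (2*J))"
      by (rule landau_o.small.compose[OF r0 limv])
    have dO: "\<delta> \<in> O[nhds 0](\<lambda>u. u)"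
    proof -
      have "(\<lambda>u. \<delta> u - T 1 (fps_X * D) u) \<in> o[nhds 0](\<lambda>u. u ^ 1)"
        using hd unfolding hexp_def hexpN_def by blast
      hence A: "(\<lambda>u. \<delta> u - fps_nth D 0 * u) \<in> O[nhds 0](\<lambda>u. u)"
        by (auto simp: T_def intro: landau_o.small_imp_big)
      have "(\<lambda>u. (\<delta> u - fps_nth D 0 * u) + fps_nth D 0 * u) \<in> O[nhds 0](\<lambda>u. u)"
        by (rule sum_in_bigo(1)[OF A bigo_lin])
      thus ?thesis by simp
    qed
    have ic: "(\<lambda>u. inverse (c u)) \<in> O[nhds 0](\<lambda>_. 1)"
      using C0 by (intro tendsto_bigo1[OF tendsto_inverse[OF limc]]) auto
    have vO: "v \<in> O[nhds 0](\<lambda>u. u)"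
    proof -
      have "(\<lambda>u. \<delta> u * inverse (c u)) \<in> O[nhds 0](\<lambda>u. u)"
        by (rule landau_o.big_1_mult[OF dO ic])
      thus ?thesis unfolding v_def by (simp add: divide_inverse)
    qed
    have "(\<lambda>u. v u ^ (2*J)) \<in> O[nhds 0](\<lambda>u. u ^ (2*J))"
      by (rule landau_o.big_power[OF vO])
    hence "(\<lambda>u. v u ^ (2*J)) \<in> O[nhds 0](\<lambda>u. u ^ J)"
      by (rule landau_o.big_trans[OF _ pow_bigo]) simp
    hence rvJ: "(\<lambda>u. r (v u)) \<in> o[nhds 0](\<lambda>u. u ^ J)"
      by (rule landau_o.small_big_trans[OF rv])
    have crv: "(\<lambda>u. r (v u) * c u) \<in> o[nhds 0](\<lambda>u. u ^ J)"
      by (rule landau_o.small_1_mult[OF rvJ hexp_bigo1[OF hc]])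
    have hs: "hexp (\<lambda>u. \<Sum>n\<le>J. aK n * (c u * \<delta> u ^ (2*n) * inverse (c u) ^ (2*n)))
                   (\<Sum>n\<le>J. fps_const (aK n) * Tm n)"
      by (intro hexp_sum hexp_cmult hterm) auto
    have hsJ: "(\<lambda>u. (\<Sum>n\<le>J. aK n * (c u * \<delta> u ^ (2*n) * inverse (c u) ^ (2*n)))
                - T J (\<Sum>n\<le>J. fps_const (aK n) * Tm n) u) \<in> o[nhds 0](\<lambda>u. u ^ J)"
      using hs unfolding hexp_def hexpN_def by blast
    have feq: "c u * fK (v u) = (\<Sum>n\<le>J. aK n * (c u * \<delta> u ^ (2*n) * inverse (c u) ^ (2*n)))
                + r (v u) * c u" for u
    proof -
      have "c u * fK (v u) = c u * (\<Sum>n\<le>J. aK n * v u ^ (2*n)) + r (v u) * c u"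
        unfolding r_def by (simp add: algebra_simps)
      also have "c u * (\<Sum>n\<le>J. aK n * v u ^ (2*n)) =
                 (\<Sum>n\<le>J. aK n * (c u * \<delta> u ^ (2*n) * inverse (c u) ^ (2*n)))"
        unfolding sum_distrib_left v_def
        by (intro sum.cong) (auto simp: divide_inverse power_mult_distrib)
      finally show ?thesis .
    qed
    have coef: "T J (\<Sum>n\<le>J. fps_const (aK n) * Tm n) u = T J ?W u" for u
    proof (rule T_cong)
      fix j assume j: "j \<le> J"
      have tm: "Tm n = fps_X ^ (2*n) * (C * D ^ (2*n) * inverse C ^ (2*n))" for n
        unfolding Tm_def by (simp add: power_mult_distrib algebra_simps)
      have "fps_nth (\<Sum>n\<le>J. fps_const (aK n) * Tm n) j = (\<Sum>n\<le>J. aK n * fps_nth (Tm n) j)"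
        by (simp add: fps_sum_nth)
      also have "\<dots> = (\<Sum>n\<le>j. aK n * fps_nth (Tm n) j)"
      proof (rule sum.mono_neutral_right)
        show "\<forall>n\<in>{..J} - {..j}. aK n * fps_nth (Tm n) j = 0"
          unfolding tm by (auto simp: fps_X_power_mult_nth)
      qed (use j in auto)
      also have "\<dots> = fps_nth ?W j" unfolding tm by simp
      finally show "fps_nth (\<Sum>n\<le>J. fps_const (aK n) * Tm n) j = fps_nth ?W j" .
    qed
    have "(\<lambda>u. ((\<Sum>n\<le>J. aK n * (c u * \<delta> u ^ (2*n) * inverse (c u) ^ (2*n)))
                - T J (\<Sum>n\<le>J. fps_const (aK n) * Tm n) u) + r (v u) * c u) \<in> o[nhds 0](\<lambda>u. u ^ J)"
      by (rule sum_in_smallo(1)[OF hsJ crv])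
    hence "hexpN J (\<lambda>u. c u * fK (v u)) ?W"
      unfolding hexpN_def feq coef[symmetric] by (simp add: algebra_simps)
    thus "\<exists>K\<ge>J. hexpN K (\<lambda>u. c u * fK (v u)) ?W" by blast
  qed
  show ?thesis using main hexp_cong_fun[OF eq1] by simp
qed

definition ev :: "real fps \<Rightarrow> real fps" where "ev F = F oo (fps_X ^ 2)"

lemma ev_nth: "fps_nth (ev F) n = (if even n then fps_nth F (n div 2) else 0)"
proof -
  have "fps_nth (ev F) n = (\<Sum>i = 0..n. fps_nth F i * (if n = 2 * i then 1 else 0))"
    unfolding ev_def fps_compose_nth by (simp add: power_mult[symmetric] fps_X_power_nth)
  also have "\<dots> = (\<Sum>i = 0..n. if i = n div 2 \<and> even n then fps_nth F i else 0)"
    by (intro sum.cong) auto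
  also have "\<dots> = (if even n then fps_nth F (n div 2) else 0)"
    by (auto simp: sum.delta)
  finally show ?thesis .
qed

lemma ev_mult: "ev (F * G) = ev F * ev G"
  unfolding ev_def by (rule fps_compose_mult_distrib) simp

lemma ev_power: "ev (F ^ n) = ev F ^ n"
  unfolding ev_def by (rule fps_compose_power[symmetric]) simp

lemma ev_inverse: "fps_nth F 0 \<noteq> 0 \<Longrightarrow> ev (inverse F) = inverse (ev F)"
  unfolding ev_def by (rule fps_inverse_compose) simp_all

lemma H_eq:
  assumes "aM 0 = 1"
  shows "Abs_fps (hseq aM) = 1 - fps_X + E aM"
  by (rule fps_ext) (auto simp: hseq_def E_def fps_X_def assms)

lemma G_eq:
  assumes "aM 0 = 1"
  shows "fps_X * Abs_fps (gseq aM) = E aM - 1 + fps_X"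
proof (rule fps_ext)
  fix j
  show "fps_nth (fps_X * Abs_fps (gseq aM)) j = fps_nth (E aM - 1 + fps_X) j"
  proof (cases j)
    case 0 thus ?thesis using assms by (simp add: E_def fps_X_mult_nth)
  next
    case (Suc i)
    show ?thesis
    proof (cases i)
      case 0 thus ?thesis using Suc by (simp add: E_def gseq_def fps_X_mult_nth fps_X_def)
    next
      case (Suc k)
      have "fps_nth (fps_X * Abs_fps (gseq aM)) j = gseq aM (Suc k)"
        using \<open>j = Suc i\<close> Suc by (simp add: fps_X_mult_nth)
      also have "\<dots> = (if even k then aM (Suc k div 2 + 1) else 0)"
        unfolding gseq_def by simp
      also have "\<dots> = fps_nth (E aM - 1 + fps_X) j"
        using \<open>j = Suc i\<close> Suc by (simp add: E_def fps_X_def)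
      finally show ?thesis .
    qed
  qed
qed

lemma sum_half:
  fixes f :: "nat \<Rightarrow> real"
  shows "(\<Sum>n\<le>j. (if j < 2 * n then 0 else f n)) = (\<Sum>n\<le>j div 2. f n)"
proof -
  have "(\<Sum>n\<le>j. (if j < 2 * n then 0 else f n)) = (\<Sum>n\<le>j div 2. (if j < 2 * n then 0 else f n))"
    by (rule sum.mono_neutral_right) auto
  also have "\<dots> = (\<Sum>n\<le>j div 2. f n)" by (intro sum.cong) auto
  finally show ?thesis .
qed

lemma P0g: "P 0 r (gseq a) = 1" by (simp add: gseq_def)
lemma P0h: "P 0 r (hseq a) = 2 powr r" by (simp add: hseq_def)
lemma P1g0: "P 1 0 (gseq a) = 0" by (simp add: gseq_def)
lemma P11h: "P 1 1 (hseq a) = -1" by (simp add: hseq_def)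
lemma P2g0: "P 2 0 (gseq a) = 0"
  by (simp add: numeral_2_eq_2 gseq_def sum.atLeast_Suc_atMost)
lemma P21h: "P 2 1 (hseq a) = a 1"
  by (simp add: numeral_2_eq_2 hseq_def sum.atLeast_Suc_atMost)

lemma WA_nth:
  fixes aN aM :: "nat \<Rightarrow> real"
  defines "G \<equiv> Abs_fps (gseq aM)" and "H \<equiv> Abs_fps (hseq aM)"
  shows "fps_nth (Abs_fps (\<lambda>j. \<Sum>n\<le>j. aN n * fps_nth (fps_X ^ (2*n) *
          ((fps_const (1/2) * H) * (fps_const (1/2) * G) ^ (2*n) * inverse (fps_const (1/2) * H) ^ (2*n))) j)) j
    = (1/2) * (\<Sum>n\<le>j div 2. aN n * (\<Sum>k\<le>j-2*n.
          P k (2 * real n) (gseq aM) * P (j-2*n-k) (1 - 2 * real n) (hseq aM)))"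
proof -
  have inner: "(fps_const (1/2) * H) * (fps_const (1/2) * G) ^ (2*n) * inverse (fps_const (1/2) * H) ^ (2*n)
      = fps_const (1/2) * (G ^ (2*n) * (H * inverse H ^ (2*n)))" for n
  proof -
    have "(fps_const (1/2) * H) * (fps_const (1/2) * G) ^ (2*n) * inverse (fps_const (1/2) * H) ^ (2*n)
        = fps_const (1/2) * (fps_const ((1/2) ^ (2*n)) * fps_const (2 ^ (2*n))) * (G ^ (2*n) * (H * inverse H ^ (2*n)))"
      by (simp add: power_mult_distrib fps_inverse_mult fps_const_inverse fps_const_power algebra_simps)
    also have "fps_const ((1/2::real) ^ (2*n)) * fps_const (2 ^ (2*n)) = 1"
      by (simp add: fps_const_mult[symmetric] power_mult_distrib[symmetric])
    finally show ?thesis by simp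
  qed
  have Pg: "P k (2 * real n) (gseq aM) = fps_nth (G ^ (2*n)) k" for k n
    using P_fps[of "gseq aM" k "2*n" 0] by (simp add: G_def gseq_def)
  have Ph: "P k (1 - 2 * real n) (hseq aM) = fps_nth (H * inverse H ^ (2*n)) k" for k n
    using P_fps[of "hseq aM" k 1 "2*n"] by (simp add: H_def hseq_def)
  have "fps_nth (Abs_fps (\<lambda>j. \<Sum>n\<le>j. aN n * fps_nth (fps_X ^ (2*n) *
          ((fps_const (1/2) * H) * (fps_const (1/2) * G) ^ (2*n) * inverse (fps_const (1/2) * H) ^ (2*n))) j)) j
      = (\<Sum>n\<le>j. (if j < 2 * n then 0 else aN n * ((1/2) * (\<Sum>k\<le>j-2*n.
          P k (2 * real n) (gseq aM) * P (j-2*n-k) (1 - 2 * real n) (hseq aM)))))"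
    unfolding inner fps_nth_Abs_fps
    by (intro sum.cong refl)
       (simp only: fps_X_power_mult_nth fps_mult_left_const_nth fps_mult_nth[of "G ^ _"] atLeast0AtMost Pg Ph; simp)
  also have "\<dots> = (\<Sum>n\<le>j div 2. aN n * ((1/2) * (\<Sum>k\<le>j-2*n.
          P k (2 * real n) (gseq aM) * P (j-2*n-k) (1 - 2 * real n) (hseq aM))))"
    by (rule sum_half)
  finally show ?thesis by (simp add: sum_distrib_left algebra_simps)
qed


lemma W2_nth:
  fixes aK :: "nat \<Rightarrow> real" and Sf Df :: "real fps"
  assumes "fps_nth Sf 0 \<noteq> 0"
  shows "fps_nth (Abs_fps (\<lambda>j. \<Sum>n\<le>j. aK n * fps_nth (fps_X ^ (2*n) *
            (ev Sf * ev Df ^ (2*n) * inverse (ev Sf) ^ (2*n))) j)) (2*m)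
       = (\<Sum>n\<le>m. aK n * fps_nth (Df ^ (2*n) * (Sf * inverse Sf ^ (2*n))) (m - n))"
proof -
  have e: "ev Sf * ev Df ^ (2*n) * inverse (ev Sf) ^ (2*n) = ev (Df ^ (2*n) * (Sf * inverse Sf ^ (2*n)))" for n
    using assms by (simp add: ev_mult ev_power ev_inverse[symmetric] mult_ac)
  have "fps_nth (Abs_fps (\<lambda>j. \<Sum>n\<le>j. aK n * fps_nth (fps_X ^ (2*n) *
            (ev Sf * ev Df ^ (2*n) * inverse (ev Sf) ^ (2*n))) j)) (2*m)
      = (\<Sum>n\<le>2*m. (if 2*m < 2*n then 0 else aK n * fps_nth (Df ^ (2*n) * (Sf * inverse Sf ^ (2*n))) (m - n)))"
    unfolding e fps_nth_Abs_fps
    by (intro sum.cong refl) (auto simp: fps_X_power_mult_nth ev_nth diff_mult_distrib2[symmetric])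
  also have "\<dots> = (\<Sum>n\<le>2*m div 2. aK n * fps_nth (Df ^ (2*n) * (Sf * inverse Sf ^ (2*n))) (m - n))"
    by (rule sum_half)
  finally show ?thesis by simp
qed

theorem theorem3p5:
  fixes M N K :: "real \<Rightarrow> real \<Rightarrow> real" and aM aN aK :: "nat \<Rightarrow> real"
  assumes "is_mean M" "symmetric_mean M" "homogeneous_mean M"
      and "is_mean N" "symmetric_mean N" "homogeneous_mean N"
      and "is_mean K" "symmetric_mean K" "homogeneous_mean K"
      and "has_sym_expansion M aM" "has_sym_expansion N aN" "has_sym_expansion K aK"
      and "stable_mean K" "stable_mean M"
      and "stabilizable K M N"
  shows "aN 0 = 1 \<and>
    (\<forall>m\<ge>1. aN m = (2 ^ (2*m) / (2 ^ (2*m) - 1)) *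
        ((1/2) * (\<Sum>n<m. aN n * (\<Sum>k\<le>2*m-2*n.
            P k (2 * real n) (gseq aM) * P (2*m-2*n-k) (1 - 2 * real n) (hseq aM)))
         + (\<Sum>n\<in>{1..m}. aK n * (\<Sum>k\<le>m-n.
            P k (2 * real n) (dseq aN aM) * P (m-n-k) (1 - 2 * real n) (sseq aN aM))))) \<and>
    aN 1 = (aK 1 + 2 * aM 1) / 3"
proof -
  have aM0: "aM 0 = 1" by (rule a0_one[OF assms(1) assms(10)])
  have aN0: "aN 0 = 1" by (rule a0_one[OF assms(4) assms(11)])
  have aK0: "aK 0 = 1" by (rule a0_one[OF assms(7) assms(12)])
  define fM where "fM = (\<lambda>u. M (1 - u) (1 + u))"
  have hM: "hexp fM (E aM)" unfolding fM_def by (rule conv_hexp[OF assms(1-3,10)])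
  have hN: "hexp (\<lambda>u. N (1 - u) (1 + u)) (E aN)" by (rule conv_hexp[OF assms(4-6,11)])
  have hK: "hexp (\<lambda>u. K (1 - u) (1 + u)) (E aK)" by (rule conv_hexp[OF assms(7-9,12)])
  define G where "G = Abs_fps (gseq aM)"
  define H where "H = Abs_fps (hseq aM)"
  have hc1: "hexp (\<lambda>u. (1/2) * (1 - u + fM u)) (fps_const (1/2) * H)"
  proof -
    have "hexp (\<lambda>u. 1 - u + fM u) (fps_const 1 - fps_X + E aM)"
      by (intro hexp_add hexp_diff hexp_const hexp_X hM)
    hence "hexp (\<lambda>u. (1/2) * (1 - u + fM u)) (fps_const (1/2) * (fps_const 1 - fps_X + E aM))"
      by (rule hexp_cmult)
    thus ?thesis unfolding H_def H_eq[of aM, OF aM0] by simp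
  qed
  have hd1: "hexp (\<lambda>u. (1/2) * (fM u - 1 + u)) (fps_X * (fps_const (1/2) * G))"
  proof -
    have "hexp (\<lambda>u. fM u - 1 + u) (E aM - fps_const 1 + fps_X)"
      by (intro hexp_add hexp_diff hexp_const hexp_X hM)
    hence hh: "hexp (\<lambda>u. (1/2) * (fM u - 1 + u)) (fps_const (1/2) * (E aM - fps_const 1 + fps_X))"
      by (rule hexp_cmult)
    have eqf: "fps_X * (fps_const (1/2) * G) = fps_const (1/2) * (E aM - fps_const 1 + fps_X)"
      using G_eq[of aM, OF aM0] unfolding G_def[symmetric] by (simp add: mult_ac)
    show ?thesis unfolding eqf by (rule hh)
  qed
  have C1pos: "fps_nth (fps_const (1/2) * H) 0 > 0" by (simp add: H_def hseq_def)
  define WA where "WA = Abs_fps (\<lambda>j. \<Sum>n\<le>j. aN n * fps_nth (fps_X ^ (2*n) *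
          ((fps_const (1/2) * H) * (fps_const (1/2) * G) ^ (2*n) * inverse (fps_const (1/2) * H) ^ (2*n))) j)"
  define A where "A = (\<lambda>u. N (1 - u) (fM u))"
  have hA: "hexp A WA"
  proof -
    have "hexp (\<lambda>u. N ((1/2) * (1 - u + fM u) - (1/2) * (fM u - 1 + u))
                      ((1/2) * (1 - u + fM u) + (1/2) * (fM u - 1 + u))) WA"
      unfolding WA_def by (rule core[OF assms(6) hN hc1 C1pos hd1])
    moreover have "(\<lambda>u. N ((1/2) * (1 - u + fM u) - (1/2) * (fM u - 1 + u))
                      ((1/2) * (1 - u + fM u) + (1/2) * (fM u - 1 + u))) = A"
    proof
      fix u
      have e1: "(1/2) * (1 - u + fM u) - (1/2) * (fM u - 1 + u) = 1 - u" by (simp add: field_simps)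
      have e2: "(1/2) * (1 - u + fM u) + (1/2) * (fM u - 1 + u) = fM u" by (simp add: field_simps)
      show "N ((1/2) * (1 - u + fM u) - (1/2) * (fM u - 1 + u))
                      ((1/2) * (1 - u + fM u) + (1/2) * (fM u - 1 + u)) = A u"
        unfolding e1 e2 A_def ..
    qed
    ultimately show ?thesis by simp
  qed
  have WA_j: "fps_nth WA j = (1/2) * (\<Sum>n\<le>j div 2. aN n * (\<Sum>k\<le>j-2*n.
          P k (2 * real n) (gseq aM) * P (j-2*n-k) (1 - 2 * real n) (hseq aM)))" for j
    unfolding WA_def G_def H_def by (rule WA_nth)
  have s_eq: "sseq aN aM m = fps_nth WA (2*m)" for m
    unfolding WA_j sseq_def by simp
  have d_eq: "dseq aN aM m = - fps_nth WA (2*m+1)" for m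
    unfolding WA_j dseq_def by simp
  define WAr where "WAr = Abs_fps (\<lambda>j. (-1) ^ j * fps_nth WA j)"
  have hB: "hexp (\<lambda>u. A (- u)) WAr" unfolding WAr_def by (rule hexp_neg[OF hA])
  define \<sigma> where "\<sigma> = (\<lambda>u. (1/2) * (A u + A (- u)))"
  define \<tau> where "\<tau> = (\<lambda>u. (1/2) * (A (- u) - A u))"
  define Sf where "Sf = Abs_fps (sseq aN aM)"
  define Df where "Df = Abs_fps (dseq aN aM)"
  have eqS: "fps_const (1/2) * (WA + WAr) = ev Sf"
  proof (rule fps_ext)
    fix j
    show "fps_nth (fps_const (1/2) * (WA + WAr)) j = fps_nth (ev Sf) j"
    proof (cases "even j")
      case True
      then obtain i where j: "j = 2 * i" by blast
      show ?thesis unfolding j by (simp add: ev_nth Sf_def s_eq WAr_def)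
    next
      case False
      thus ?thesis by (simp add: ev_nth WAr_def)
    qed
  qed
  have eqD: "fps_const (1/2) * (WAr - WA) = fps_X * ev Df"
  proof (rule fps_ext)
    fix j
    show "fps_nth (fps_const (1/2) * (WAr - WA)) j = fps_nth (fps_X * ev Df) j"
    proof (cases "even j")
      case True
      thus ?thesis by (simp add: ev_nth WAr_def fps_X_mult_nth)
    next
      case False
      then obtain i where j: "j = 2 * i + 1" by (metis oddE)
      show ?thesis unfolding j by (simp add: ev_nth Df_def d_eq WAr_def fps_X_mult_nth)
    qed
  qed
  have hs: "hexp \<sigma> (ev Sf)"
    unfolding \<sigma>_def eqS[symmetric] by (intro hexp_cmult hexp_add hA hB)
  have ht: "hexp \<tau> (fps_X * ev Df)"
    unfolding \<tau>_def eqD[symmetric] by (intro hexp_cmult hexp_diff hA hB)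
  have WA0: "fps_nth WA 0 = 1"
    unfolding WA_j by (simp add: aN0 P0g P0h gseq_def hseq_def)
  have Sf0: "fps_nth Sf 0 = 1" unfolding Sf_def using s_eq[of 0] WA0 by simp
  have S2pos: "fps_nth (ev Sf) 0 > 0" by (simp add: ev_nth Sf0)
  define W2 where "W2 = Abs_fps (\<lambda>j. \<Sum>n\<le>j. aK n * fps_nth (fps_X ^ (2*n) *
            (ev Sf * ev Df ^ (2*n) * inverse (ev Sf) ^ (2*n))) j)"
  have hW2: "hexp (\<lambda>u. K (\<sigma> u - \<tau> u) (\<sigma> u + \<tau> u)) W2"
    unfolding W2_def by (rule core[OF assms(9) hK hs S2pos ht])
  have evfun: "eventually (\<lambda>u. K (\<sigma> u - \<tau> u) (\<sigma> u + \<tau> u) = N (1 - u) (1 + u)) (nhds 0)"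
    using ev_near[OF zero_less_one]
  proof eventually_elim
    case (elim u)
    have u1: "1 - u > 0" "1 + u > 0" using elim by auto
    have fMpos: "fM u > 0"
      using assms(1) u1 unfolding is_mean_def fM_def by (metis min_less_iff_conj order_less_le_trans)
    have fMsym: "fM (- u) = fM u"
      using assms(2) u1 unfolding symmetric_mean_def fM_def by auto
    have a: "\<sigma> u - \<tau> u = A u" unfolding \<sigma>_def \<tau>_def by (simp add: field_simps)
    have b: "\<sigma> u + \<tau> u = N (fM u) (1 + u)"
    proof -
      have "\<sigma> u + \<tau> u = A (- u)" unfolding \<sigma>_def \<tau>_def by (simp add: field_simps)
      also have "\<dots> = N (1 + u) (fM u)" unfolding A_def fMsym by simp
      also have "\<dots> = N (fM u) (1 + u)" using assms(5) u1 fMpos unfolding symmetric_mean_def by auto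
      finally show ?thesis .
    qed
    show ?case unfolding a b A_def fM_def
      using assms(15) u1 unfolding stabilizable_def by auto
  qed
  have hW2': "hexp (\<lambda>u. N (1 - u) (1 + u)) W2"
    using hW2 hexp_cong_fun[OF evfun] by simp
  have EW: "E aN = W2" by (rule hexp_unique[OF hN hW2'])
  have d0: "dseq aN aM 0 = 1/2"
    by (simp add: dseq_def aN0 P0g P0h P1g0 P11h gseq_def hseq_def)
  have Pd: "P k (2 * real n) (dseq aN aM) = fps_nth (Df ^ (2*n)) k" for k n
    using P_fps[of "dseq aN aM" k "2*n" 0] d0 by (simp add: Df_def)
  have Ps: "P k (1 - 2 * real n) (sseq aN aM) = fps_nth (Sf * inverse Sf ^ (2*n)) k" for k n
    using P_fps[of "sseq aN aM" k 1 "2*n"] Sf0 by (simp add: Sf_def)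
  have form: "aN m = (2 ^ (2*m) / (2 ^ (2*m) - 1)) *
        ((1/2) * (\<Sum>n<m. aN n * (\<Sum>k\<le>2*m-2*n.
            P k (2 * real n) (gseq aM) * P (2*m-2*n-k) (1 - 2 * real n) (hseq aM)))
         + (\<Sum>n\<in>{1..m}. aK n * (\<Sum>k\<le>m-n.
            P k (2 * real n) (dseq aN aM) * P (m-n-k) (1 - 2 * real n) (sseq aN aM))))"
    if m1: "m \<ge> 1" for m
  proof -
    define R1 where "R1 = (1/2) * (\<Sum>n<m. aN n * (\<Sum>k\<le>2*m-2*n.
            P k (2 * real n) (gseq aM) * P (2*m-2*n-k) (1 - 2 * real n) (hseq aM)))"
    define R2 where "R2 = (\<Sum>n\<in>{1..m}. aK n * (\<Sum>k\<le>m-n.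
            P k (2 * real n) (dseq aN aM) * P (m-n-k) (1 - 2 * real n) (sseq aN aM)))"
    have "aN m = fps_nth (E aN) (2*m)" by (simp add: E_def)
    also have "\<dots> = (\<Sum>n\<le>m. aK n * fps_nth (Df ^ (2*n) * (Sf * inverse Sf ^ (2*n))) (m - n))"
      unfolding EW W2_def by (rule W2_nth) (simp add: Sf0)
    also have "\<dots> = sseq aN aM m + R2"
    proof -
      have ins: "{..m} = insert 0 {1..m}" by auto
      have "(\<Sum>n\<in>{1..m}. aK n * fps_nth (Df ^ (2*n) * (Sf * inverse Sf ^ (2*n))) (m - n)) = R2"
        unfolding R2_def Pd Ps by (intro sum.cong refl) (simp add: fps_mult_nth atLeast0AtMost)
      thus ?thesis unfolding ins by (simp add: sum.insert aK0 Sf_def)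
    qed
    also have "sseq aN aM m = R1 + aN m * ((1/2) * 2 powr (1 - 2 * real m))"
    proof -
      have ins: "{..m} = insert m {..<m}" by auto
      show ?thesis unfolding sseq_def R1_def ins
        by (simp add: sum.insert P0g P0h algebra_simps gseq_def hseq_def)
    qed
    finally have eq: "aN m = R1 + aN m * ((1/2) * 2 powr (1 - 2 * real m)) + R2" .
    have pw: "(1/2) * 2 powr (1 - 2 * real m) = 1 / 2 ^ (2*m)"
    proof -
      have "2 powr (1 - 2 * real m) = 2 / 2 powr (real (2*m))" by (simp add: powr_diff)
      also have "\<dots> = 2 / 2 ^ (2*m)" using powr_realpow[of 2 "2*m"] by simp
      finally show ?thesis by simp
    qed
    have q: "(2::real) ^ (2*m) > 1" using m1 by (intro one_less_power) auto
    from eq pw have "aN m * (1 - 1 / 2 ^ (2*m)) = R1 + R2" by (simp add: algebra_simps)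
    hence "aN m * ((2 ^ (2*m) - 1) / 2 ^ (2*m)) = R1 + R2" using q by (simp add: field_simps)
    hence "aN m = (2 ^ (2*m) / (2 ^ (2*m) - 1)) * (R1 + R2)" using q by (simp add: field_simps)
    thus ?thesis unfolding R1_def R2_def .
  qed
  have a1: "aN 1 = (aK 1 + 2 * aM 1) / 3"
  proof -
    have "aN 1 = (4 / 3) * ((1/2) * aM 1 + aK 1 * ((1/2) powr 2))"
      using form[of 1] by (simp add: aN0 P0g P0h P1g0 P11h P2g0 P21h d0 Sf0 hseq_def
          numeral_2_eq_2 sseq_def gseq_def)
    thus ?thesis by (simp add: powr_numeral power2_eq_square algebra_simps)
  qed
  show ?thesis using aN0 form a1 by blast
qed

end
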